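(* Let $n\in\mathbb N$ and $S\subseteq[n-1]$. Then $$F_{n,S}(\mathbf x)=\sum_{\alpha}\frac{\Psi_\alpha(\mathbf x)}{z_\alpha}(-1)^{|S\setminus S_\alpha|},$$ where the sum ranges over all compositions $\alpha$ of $n$ such that $S$ is $\alpha$-unimodal.
   Context: A composition $\alpha=(\alpha_1,\dots,\alpha_\ell)$ of $n$ is a sequence of positive integers summing to $n$; $\ell(\alpha)=\ell$; $S_\alpha=\{\alpha_1,\alpha_1+\alpha_2,\dots,\alpha_1+\dots+\alpha_{\ell-1}\}$; blocks $B_i(\alpha)=\{\alpha_1+\dots+\alpha_{i-1}+1,\dots,\alpha_1+\dots+\alpha_i\}$. $\alpha\le\beta$ means $S_\beta\subseteq S_\alpha$. A set $S\subseteq[n-1]$ is $\alpha$-unimodal if for every $i$ the set $S\cap(B_i(\alpha)\setminus S_\alpha)$ is an initial segment (in increasing order) of $B_i(\alpha)\setminus S_\alpha$. Quasisymmetric functions in $\mathbf x=(x_1,x_2,\dots)$: monomial $M_\alpha=\sum_{i_1<\dots<i_\ell}x_{i_1}^{\alpha_1}\cdots x_{i_\ell}^{\alpha_\ell}$; fundamental $F_{n,S}=\sum x_{j_1}\cdots x_{j_n}$ over $j_1\le\dots\le j_n$ with $j_i<j_{i+1}$ for $i\in S$. $z_\alpha=\prod_{i\ge1}i^{m_i}m_i!$ with $m_i$ the number of parts equal to $i$. For a composition $\gamma$ set $\pi(\gamma)=\prod_{i=1}^{\ell(\gamma)}(\gamma_1+\dots+\gamma_i)$; for $\alpha\le\beta$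 set $\pi(\alpha,\beta)=\prod_{i=1}^{\ell(\beta)}\pi(\alpha^{(i)})$, where $\alpha^{(i)}$ is the composition of $\beta_i$ formed by the parts $\alpha_j$ with $B_j(\alpha)\subseteq B_i(\beta)$. The quasisymmetric power sum is $\Psi_\alpha=z_\alpha\sum_{\beta\ge\alpha}\frac{1}{\pi(\alpha,\beta)}M_\beta$. *)

theory Defs
  imports Complex_Main
begin

text \<open>Quasisymmetric functions in
infinitely many variables x_0, x_1, ... are represented by their coefficient
functions: a monomial is an exponent vector e :: nat \<Rightarrow> nat (finite support),
and a series is a map from exponent vectors to real coefficients.\<close>

definition compositions :: "nat \<Rightarrow> nat list set" where
  "compositions n = {\<alpha>. (\<forall>a\<in>set \<alpha>. 0 < a) \<and> sum_list \<alpha> = n}"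

definition Sset :: "nat list \<Rightarrow> nat set" where
  "Sset \<alpha> = {sum_list (take k \<alpha>) | k. 1 \<le> k \<and> k \<le> length \<alpha> - 1}"

text \<open>Block B_(k+1)(alpha), 0-indexed by k < length alpha.\<close>
definition block :: "nat list \<Rightarrow> nat \<Rightarrow> nat set" where
  "block \<alpha> k = {sum_list (take k \<alpha>) + 1 .. sum_list (take (Suc k) \<alpha>)}"

definition comp_le :: "nat list \<Rightarrow> nat list \<Rightarrow> bool" where
  "comp_le \<alpha> \<beta> \<longleftrightarrow> Sset \<beta> \<subseteq> Sset \<alpha>"

definition unimodal :: "nat list \<Rightarrow> nat set \<Rightarrow> bool" where
  "unimodal \<alpha> S \<longleftrightarrow>
     (\<forall>k < length \<alpha>. \<forall>x \<in> S \<inter> (block \<alpha> k - Sset \<alpha>).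
        \<forall>y \<in> block \<alpha> k - Sset \<alpha>. y < x \<longrightarrow> y \<in> S)"

definition z :: "nat list \<Rightarrow> nat" where
  "z \<alpha> = (\<Prod>i\<in>set \<alpha>. i ^ count_list \<alpha> i * fact (count_list \<alpha> i))"

definition pi_comp :: "nat list \<Rightarrow> nat" where
  "pi_comp \<gamma> = (\<Prod>i=1..length \<gamma>. sum_list (take i \<gamma>))"

definition refine_part :: "nat list \<Rightarrow> nat list \<Rightarrow> nat \<Rightarrow> nat list" where
  "refine_part \<alpha> \<beta> i = map (\<lambda>j. \<alpha> ! j) (filter (\<lambda>j. block \<alpha> j \<subseteq> block \<beta> i) [0..<length \<alpha>])"

definition pi_pair :: "nat list \<Rightarrow> nat list \<Rightarrow> nat" where
  "pi_pair \<alpha> \<beta> = (\<Prod>i<length \<beta>. pi_comp (refine_part \<alpha> \<beta> i))"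

text \<open>Coefficient of x^e in M_alpha: sum over i_1 < ... < i_l of x_(i_1)^(alpha_1)...\<close>
definition M_coeff :: "nat list \<Rightarrow> (nat \<Rightarrow> nat) \<Rightarrow> real" where
  "M_coeff \<alpha> e = real (card {is. length is = length \<alpha> \<and> sorted_wrt (<) is \<and>
      (\<forall>v. e v = (\<Sum>k<length \<alpha>. if is ! k = v then \<alpha> ! k else 0))})"

text \<open>Coefficient of x^e in F_(n,S): sum over j_1 \<le> ... \<le> j_n with j_i < j_(i+1) for i \<in> S.
 (List positions are 0-indexed, so j_i is js ! (i-1).)\<close>
definition F_coeff :: "nat \<Rightarrow> nat set \<Rightarrow> (nat \<Rightarrow> nat) \<Rightarrow> real" where
  "F_coeff n S e = real (card {js. length js = n \<and> sorted js \<and>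
      (\<forall>i\<in>S. js ! (i - 1) < js ! i) \<and> (\<forall>v. count_list js v = e v)})"

definition Psi_coeff :: "nat list \<Rightarrow> (nat \<Rightarrow> nat) \<Rightarrow> real" where
  "Psi_coeff \<alpha> e = real (z \<alpha>) *
     (\<Sum>\<beta> | \<beta> \<in> compositions (sum_list \<alpha>) \<and> comp_le \<alpha> \<beta>.
        M_coeff \<beta> e / real (pi_pair \<alpha> \<beta>))"

end

theory Submission
  imports Defs "HOL-Library.Multiset"
begin

definition pos :: "nat list \<Rightarrow> bool" where "pos xs \<longleftrightarrow> (\<forall>x\<in>set xs. 0 < x)"
definition shift :: "nat \<Rightarrow> nat set \<Rightarrow> nat set" where "shift p S = {x. 0 < x \<and> x + p \<in> S}"

lemma pos_append[simp]: "pos (a @ b) \<longleftrightarrow> pos a \<and> pos b" by (auto simp: pos_def)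
lemma pos_Cons[simp]: "pos (x # b) \<longleftrightarrow> 0 < x \<and> pos b" by (auto simp: pos_def)
lemma pos_Nil[simp]: "pos []" by (auto simp: pos_def)

lemma compositions_iff: "\<alpha> \<in> compositions n \<longleftrightarrow> pos \<alpha> \<and> sum_list \<alpha> = n"
  by (auto simp: compositions_def pos_def)

lemma pos_sum_eq_0: "pos a \<Longrightarrow> sum_list a = 0 \<longleftrightarrow> a = []"
  by (cases a) (auto simp: pos_def)

lemma pos_length_le: "pos a \<Longrightarrow> length a \<le> sum_list a"
  by (induction a) auto

lemma pos_elem_le: "x \<in> set (a::nat list) \<Longrightarrow> x \<le> sum_list a"
  by (induction a) auto

lemma finite_compositions: "finite (compositions n)"
proof -
  have "compositions n \<subseteq> {xs. set xs \<subseteq> {..n} \<and> length xs \<le> n}"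
    by (auto simp: compositions_iff dest: pos_length_le pos_elem_le)
  moreover have "finite {xs. set xs \<subseteq> {..n} \<and> length xs \<le> n}"
    by (rule finite_lists_length_le) auto
  ultimately show ?thesis by (rule finite_subset)
qed

lemma Sset_alt: "Sset \<alpha> = (\<lambda>k. sum_list (take k \<alpha>)) ` {1..<length \<alpha>}"
proof -
  have "Sset \<alpha> = (\<lambda>k. sum_list (take k \<alpha>)) ` {k. 1 \<le> k \<and> k \<le> length \<alpha> - 1}"
    unfolding Sset_def by blast
  also have "{k. 1 \<le> k \<and> k \<le> length \<alpha> - 1} = {1..<length \<alpha>}" by auto
  finally show ?thesis .
qed

lemma sum_take_le: "sum_list (take k a) \<le> sum_list (a::nat list)"
proof -
  have "sum_list a = sum_list (take k a) + sum_list (drop k a)"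
    by (metis append_take_drop_id sum_list_append)
  thus ?thesis by simp
qed

lemma pos_sum_take_less: "pos a \<Longrightarrow> k < length a \<Longrightarrow> sum_list (take k a) < sum_list a"
proof -
  assume "pos a" "k < length a"
  have "sum_list a = sum_list (take k a) + sum_list (drop k a)"
    by (metis append_take_drop_id sum_list_append)
  moreover have "drop k a \<noteq> []" using \<open>k < length a\<close> by simp
  moreover have "pos (drop k a)" using \<open>pos a\<close> by (auto simp: pos_def dest: in_set_dropD)
  ultimately show ?thesis using pos_sum_eq_0 by fastforce
qed

lemma pos_sum_take_pos: "pos a \<Longrightarrow> 1 \<le> k \<Longrightarrow> k \<le> length a \<Longrightarrow> 0 < sum_list (take k a)"
proof -
  assume "pos a" "1 \<le> k" "k \<le> length a"
  have "take k a \<noteq> []" using \<open>1 \<le> k\<close> \<open>k \<le> length a\<close> by auto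
  moreover have "pos (take k a)" using \<open>pos a\<close> by (auto simp: pos_def dest: in_set_takeD)
  ultimately show ?thesis using pos_sum_eq_0 by fastforce
qed

lemma Sset_bound: "pos a \<Longrightarrow> Sset a \<subseteq> {1..<sum_list a}"
  unfolding Sset_alt using pos_sum_take_less pos_sum_take_pos
  by (auto simp: Suc_le_eq)

lemma Sset_Nil[simp]: "Sset [] = {}" and Sset_single[simp]: "Sset [x] = {}"
  by (auto simp: Sset_def)

lemma Sset_append:
  "Sset (a @ b) = Sset a \<union> (if a \<noteq> [] \<and> b \<noteq> [] then {sum_list a} else {}) \<union> (\<lambda>x. sum_list a + x) ` Sset b"
proof -
  have A: "{1..<length a + length b} = {1..<length a} \<union> (if a \<noteq> [] \<and> b \<noteq> [] then {length a} else {}) \<union> (\<lambda>j. length a + j) ` {1..<length b}"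
  proof (rule set_eqI)
    fix k show "k \<in> {1..<length a + length b} \<longleftrightarrow> k \<in> {1..<length a} \<union> (if a \<noteq> [] \<and> b \<noteq> [] then {length a} else {}) \<union> (\<lambda>j. length a + j) ` {1..<length b}"
    proof (cases "k < length a \<or> k = length a")
      case True thus ?thesis by (auto simp: Suc_le_eq)
    next
      case False
      hence "k = length a + (k - length a)" "k - length a \<ge> 1" by auto
      thus ?thesis using False by (auto simp: image_iff)
    qed
  qed
  have 1: "(\<lambda>k. sum_list (take k (a@b))) ` {1..<length a} = (\<lambda>k. sum_list (take k a)) ` {1..<length a}"
    by (rule image_cong) auto
  have 2: "(\<lambda>k. sum_list (take k (a@b))) ` ((\<lambda>j. length a + j) ` {1..<length b}) = (\<lambda>x. sum_list a + x) ` ((\<lambda>k. sum_list (take k b)) ` {1..<length b})"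
    unfolding image_image by (rule image_cong) simp_all
  have 3: "(\<lambda>k. sum_list (take k (a@b))) ` (if a \<noteq> [] \<and> b \<noteq> [] then {length a} else {}) = (if a \<noteq> [] \<and> b \<noteq> [] then {sum_list a} else {})"
    by simp
  show ?thesis
    unfolding Sset_alt length_append A image_Un 1 2 3 ..
qed


lemma block_append_less: "k < length a \<Longrightarrow> block (a @ b) k = block a k"
  by (simp add: block_def)

lemma block_append_ge: "block (a @ b) (length a + j) = (\<lambda>x. sum_list a + x) ` block b j"
proof -
  have "block (a @ b) (length a + j) = {sum_list a + sum_list (take j b) + 1 .. sum_list a + sum_list (take (Suc j) b)}"
    by (simp add: block_def)
  also have "\<dots> = (\<lambda>x. sum_list a + x) ` block b j"
    unfolding block_def by (simp add: add.assoc)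
  finally show ?thesis .
qed

lemma block_bound: "pos a \<Longrightarrow> k < length a \<Longrightarrow> block a k \<subseteq> {1..sum_list a}"
  unfolding block_def using sum_take_le[of "Suc k" a] by auto

lemma block_nonempty: "pos a \<Longrightarrow> k < length a \<Longrightarrow> block a k \<noteq> {}"
  unfolding block_def by (auto simp: take_Suc_conv_app_nth pos_def Suc_le_eq)

definition Qc :: "nat set \<Rightarrow> nat set \<Rightarrow> bool" where
  "Qc S W \<longleftrightarrow> (\<forall>x\<in>S \<inter> W. \<forall>y\<in>W. y < x \<longrightarrow> y \<in> S)"

lemma unimodal_Qc: "unimodal \<alpha> S \<longleftrightarrow> (\<forall>k<length \<alpha>. Qc S (block \<alpha> k - Sset \<alpha>))"
  unfolding unimodal_def Qc_def by blast

lemma Qc1: assumes W: "W \<subseteq> {..p}" shows "Qc S (W - {p}) = Qc (S \<inter> {..<p}) W"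
proof
  assume H: "Qc S (W - {p})"
  show "Qc (S \<inter> {..<p}) W" unfolding Qc_def
  proof (intro ballI impI)
    fix x y assume x: "x \<in> S \<inter> {..<p} \<inter> W" and y: "y \<in> W" "y < x"
    have "y \<noteq> p" "x \<noteq> p" using x y by auto
    hence "y \<in> S" using H x y unfolding Qc_def by blast
    thus "y \<in> S \<inter> {..<p}" using x y by auto
  qed
next
  assume H: "Qc (S \<inter> {..<p}) W"
  show "Qc S (W - {p})" unfolding Qc_def
  proof (intro ballI impI)
    fix x y assume x: "x \<in> S \<inter> (W - {p})" and y: "y \<in> W - {p}" "y < x"
    have "x < p" using x W by force
    hence "y \<in> S \<inter> {..<p}" using H x y unfolding Qc_def by auto
    thus "y \<in> S" by auto
  qed
qed

lemma Qc2: assumes W: "W \<subseteq> {1..}" shows "Qc S ((\<lambda>x. p + x) ` W) = Qc (shift p S) W"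
proof
  assume H: "Qc S ((\<lambda>x. p + x) ` W)"
  show "Qc (shift p S) W" unfolding Qc_def
  proof (intro ballI impI)
    fix x y assume x: "x \<in> shift p S \<inter> W" and y: "y \<in> W" "y < x"
    have "p + x \<in> S \<inter> (\<lambda>x. p + x) ` W" using x by (auto simp: shift_def add.commute)
    moreover have "p + y \<in> (\<lambda>x. p + x) ` W" "p + y < p + x" using y by auto
    ultimately have "p + y \<in> S" using H unfolding Qc_def by blast
    thus "y \<in> shift p S" using y W by (auto simp: shift_def add.commute)
  qed
next
  assume H: "Qc (shift p S) W"
  show "Qc S ((\<lambda>x. p + x) ` W)" unfolding Qc_def
  proof (intro ballI impI)
    fix x y assume x: "x \<in> S \<inter> (\<lambda>x. p + x) ` W" and y: "y \<in> (\<lambda>x. p + x) ` W" "y < x"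
    then obtain x' y' where xy: "x = p + x'" "y = p + y'" "x' \<in> W" "y' \<in> W" by auto
    have "x' \<in> shift p S" using x xy W by (auto simp: shift_def add.commute)
    hence "y' \<in> shift p S" using H xy y unfolding Qc_def by auto
    thus "y \<in> S" using xy by (auto simp: shift_def add.commute)
  qed
qed

lemma Sset_pos: "pos b \<Longrightarrow> Sset b \<subseteq> {1..}"
  using Sset_bound by fastforce

lemma unimodal_append:
  assumes a: "pos a" and b: "pos b" and S: "S \<subseteq> {1..<sum_list a + sum_list b}"
  shows "unimodal (a @ b) S \<longleftrightarrow> unimodal a (S \<inter> {..<sum_list a}) \<and> unimodal b (shift (sum_list a) S)"
proof (cases "b = []")
  case True
  hence "S \<inter> {..<sum_list a} = S" "shift (sum_list a) S = {}" using S by (auto simp: shift_def)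
  thus ?thesis using True by (simp add: unimodal_def)
next
  case bne: False
  let ?p = "sum_list a"
  have L: "Qc S (block (a@b) k - Sset (a@b)) = Qc (S \<inter> {..<?p}) (block a k - Sset a)" if k: "k < length a" for k
  proof -
    have ane: "a \<noteq> []" using k by auto
    have "block (a@b) k - Sset (a@b) = (block a k - Sset a) - {?p}"
      using block_bound[OF a k] Sset_pos[OF b] ane bne
      by (auto simp: block_append_less[OF k] Sset_append)
    moreover have "block a k - Sset a \<subseteq> {..?p}" using block_bound[OF a k] by auto
    ultimately show ?thesis using Qc1 by simp
  qed
  have R: "Qc S (block (a@b) (length a + j) - Sset (a@b)) = Qc (shift ?p S) (block b j - Sset b)" if j: "j < length b" for j
  proof -
    have "block (a@b) (length a + j) - Sset (a@b) = (\<lambda>x. ?p + x) ` (block b j - Sset b)"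
      using block_bound[OF b j] Sset_bound[OF a]
      by (auto simp: block_append_ge Sset_append)
    moreover have "block b j - Sset b \<subseteq> {1..}" using block_bound[OF b j] by auto
    ultimately show ?thesis using Qc2 by simp
  qed
  have "unimodal (a @ b) S \<longleftrightarrow> (\<forall>k<length a. Qc S (block (a@b) k - Sset (a@b))) \<and>
      (\<forall>j<length b. Qc S (block (a@b) (length a + j) - Sset (a@b)))"
    unfolding unimodal_Qc length_append
  proof (intro iffI conjI allI impI)
    fix j assume "\<forall>k<length a + length b. Qc S (block (a @ b) k - Sset (a @ b))" "j < length b"
    thus "Qc S (block (a @ b) (length a + j) - Sset (a @ b))" by simp
  next
    fix k assume H: "(\<forall>k<length a. Qc S (block (a @ b) k - Sset (a @ b))) \<and>
      (\<forall>j<length b. Qc S (block (a @ b) (length a + j) - Sset (a @ b)))" and k: "k < length a + length b"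
    show "Qc S (block (a @ b) k - Sset (a @ b))"
    proof (cases "k < length a")
      case True thus ?thesis using H by simp
    next
      case False
      hence "k = length a + (k - length a)" "k - length a < length b" using k by auto
      thus ?thesis using H by metis
    qed
  qed auto
  also have "\<dots> \<longleftrightarrow> unimodal a (S \<inter> {..<sum_list a}) \<and> unimodal b (shift (sum_list a) S)"
    unfolding unimodal_Qc using L R by simp
  finally show ?thesis .
qed

lemma sign_append_set:
  assumes a: "pos a" and b: "pos b" and S: "S \<subseteq> {1..<sum_list a + sum_list b}"
  shows "S - Sset (a @ b) = (S \<inter> {..<sum_list a} - Sset a) \<union> (\<lambda>x. sum_list a + x) ` (shift (sum_list a) S - Sset b)"
proof -
  let ?p = "sum_list a"
  have pS: "?p \<in> S \<Longrightarrow> a \<noteq> [] \<and> b \<noteq> []" using S by auto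
  show ?thesis
  proof (rule set_eqI)
    fix x
    show "x \<in> S - Sset (a @ b) \<longleftrightarrow> x \<in> (S \<inter> {..<?p} - Sset a) \<union> (\<lambda>x. ?p + x) ` (shift ?p S - Sset b)"
    proof (cases "x < ?p")
      case True thus ?thesis using Sset_pos[OF b] by (auto simp: Sset_append)
    next
      case False
      show ?thesis
      proof (cases "x = ?p")
        case True thus ?thesis using pS Sset_pos[OF b] Sset_bound[OF a] by (auto simp: Sset_append shift_def)
      next
        case False
        hence x: "x = ?p + (x - ?p)" "x - ?p > 0" using \<open>\<not> x < ?p\<close> by auto
        show ?thesis
        proof
          assume xin: "x \<in> S - Sset (a @ b)"
          have "x - ?p \<in> shift ?p S - Sset b"
          proof -
            have "x - ?p \<notin> Sset b"
            proof
              assume "x - ?p \<in> Sset b"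
              hence "?p + (x - ?p) \<in> Sset (a @ b)" by (simp add: Sset_append)
              thus False using xin x by simp
            qed
            thus ?thesis using xin x by (auto simp: shift_def)
          qed
          hence "x \<in> (\<lambda>x. ?p + x) ` (shift ?p S - Sset b)" using x by (metis image_eqI)
          thus "x \<in> (S \<inter> {..<?p} - Sset a) \<union> (\<lambda>x. ?p + x) ` (shift ?p S - Sset b)" by blast
        next
          assume "x \<in> (S \<inter> {..<?p} - Sset a) \<union> (\<lambda>x. ?p + x) ` (shift ?p S - Sset b)"
          thus "x \<in> S - Sset (a @ b)"
            using x Sset_bound[OF a] \<open>\<not> x < ?p\<close> by (auto simp: Sset_append shift_def add.commute)
        qed
      qed
    qed
  qed
qed

lemma sign_append:
  assumes a: "pos a" and b: "pos b" and S: "S \<subseteq> {1..<sum_list a + sum_list b}"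
  shows "card (S - Sset (a @ b)) = card (S \<inter> {..<sum_list a} - Sset a) + card (shift (sum_list a) S - Sset b)"
proof -
  have fin: "finite S" using S finite_subset by blast
  have f2: "finite (shift (sum_list a) S)"
  proof -
    have "shift (sum_list a) S \<subseteq> (\<lambda>x. x - sum_list a) ` S" unfolding shift_def by (auto simp: image_iff) (metis add_diff_cancel_right')
    thus ?thesis using fin finite_subset by blast
  qed
  have "card (S - Sset (a @ b)) = card ((S \<inter> {..<sum_list a} - Sset a) \<union> (\<lambda>x. sum_list a + x) ` (shift (sum_list a) S - Sset b))"
    using sign_append_set[OF assms] by simp
  also have "\<dots> = card (S \<inter> {..<sum_list a} - Sset a) + card ((\<lambda>x. sum_list a + x) ` (shift (sum_list a) S - Sset b))"
    by (rule card_Un_disjoint) (use fin f2 in auto)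
  also have "card ((\<lambda>x. sum_list a + x) ` (shift (sum_list a) S - Sset b)) = card (shift (sum_list a) S - Sset b)"
    by (rule card_image) (auto simp: inj_on_def)
  finally show ?thesis .
qed


lemma pi_comp_snoc: "pi_comp (g @ [j]) = pi_comp g * (sum_list g + j)"
proof -
  have "pi_comp (g @ [j]) = (\<Prod>i\<in>insert (Suc (length g)) {1..length g}. sum_list (take i (g @ [j])))"
    unfolding pi_comp_def by (simp add: atLeastAtMostSuc_conv)
  also have "\<dots> = sum_list (take (Suc (length g)) (g @ [j])) * (\<Prod>i=1..length g. sum_list (take i (g @ [j])))"
    by (rule prod.insert) auto
  also have "(\<Prod>i=1..length g. sum_list (take i (g @ [j]))) = pi_comp g"
    unfolding pi_comp_def by (rule prod.cong) auto
  finally show ?thesis by simp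
qed

lemma pi_comp_pos: "pos g \<Longrightarrow> 0 < pi_comp g"
  unfolding pi_comp_def using pos_sum_take_pos by (auto intro!: prod_pos)

lemma compositions_snoc:
  assumes "0 < m"
  shows "compositions m = (\<lambda>(d, g). g @ [m - d]) ` (SIGMA d:{..<m}. compositions d)"
proof (rule set_eqI)
  fix \<alpha>
  show "\<alpha> \<in> compositions m \<longleftrightarrow> \<alpha> \<in> (\<lambda>(d, g). g @ [m - d]) ` (SIGMA d:{..<m}. compositions d)"
  proof
    assume H: "\<alpha> \<in> compositions m"
    hence ne: "\<alpha> \<noteq> []" using assms by (auto simp: compositions_iff)
    let ?g = "butlast \<alpha>" and ?d = "sum_list (butlast \<alpha>)"
    have al: "\<alpha> = ?g @ [last \<alpha>]" using ne by simp
    have pa: "pos (?g @ [last \<alpha>])" "sum_list (?g @ [last \<alpha>]) = m" using H al by (auto simp: compositions_iff)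
    hence "pos ?g" "0 < last \<alpha>" "?d + last \<alpha> = m" by auto
    hence "?d < m" "last \<alpha> = m - ?d" "?g \<in> compositions ?d" by (auto simp: compositions_iff)
    thus "\<alpha> \<in> (\<lambda>(d, g). g @ [m - d]) ` (SIGMA d:{..<m}. compositions d)"
      using al by (auto intro!: image_eqI[of _ _ "(?d, ?g)"])
  next
    assume "\<alpha> \<in> (\<lambda>(d, g). g @ [m - d]) ` (SIGMA d:{..<m}. compositions d)"
    thus "\<alpha> \<in> compositions m" by (auto simp: compositions_iff)
  qed
qed

lemma compositions_snoc_inj: "inj_on (\<lambda>(d, g). g @ [m - d]) (SIGMA d:{..<m}. compositions d)"
  by (auto simp: inj_on_def)

definition fsum :: "nat \<Rightarrow> nat set \<Rightarrow> real" where
  "fsum m T = (\<Sum>g\<in>compositions m. if unimodal g T then (-1) ^ card (T - Sset g) / real (pi_comp g) else 0)"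

definition ISeg :: "nat set \<Rightarrow> bool" where
  "ISeg U \<longleftrightarrow> (\<forall>x\<in>U. \<forall>y. 1 \<le> y \<longrightarrow> y < x \<longrightarrow> y \<in> U)"

lemma unimodal_single: assumes U: "U \<subseteq> {1..<j}" shows "unimodal [j] U \<longleftrightarrow> ISeg U"
proof -
  have "unimodal [j] U \<longleftrightarrow> Qc U {1..j}" unfolding unimodal_Qc by (simp add: block_def)
  also have "\<dots> \<longleftrightarrow> ISeg U"
    unfolding Qc_def ISeg_def
  proof (intro iffI ballI allI impI)
    fix x y assume H: "\<forall>x\<in>U \<inter> {1..j}. \<forall>y\<in>{1..j}. y < x \<longrightarrow> y \<in> U" and x: "x \<in> U" and y: "1 \<le> y" "y < x"
    have "x \<in> {1..j}" "y \<in> {1..j}" using x y U by auto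
    thus "y \<in> U" using H x y by blast
  next
    fix x y assume H: "\<forall>x\<in>U. \<forall>y. 1 \<le> y \<longrightarrow> y < x \<longrightarrow> y \<in> U" and x: "x \<in> U \<inter> {1..j}" and y: "y \<in> {1..j}" "y < x"
    thus "y \<in> U" by auto
  qed
  finally show ?thesis .
qed

lemma ISeg_shift: "ISeg (shift d T) \<longleftrightarrow> (\<forall>x\<in>T. \<forall>y. d < y \<longrightarrow> y < x \<longrightarrow> y \<in> T)"
proof
  assume H: "ISeg (shift d T)"
  show "\<forall>x\<in>T. \<forall>y. d < y \<longrightarrow> y < x \<longrightarrow> y \<in> T"
  proof (intro ballI allI impI)
    fix x y assume "x \<in> T" "d < y" "y < x"
    hence "x - d \<in> shift d T" "1 \<le> y - d" "y - d < x - d" by (auto simp: shift_def)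
    hence "y - d \<in> shift d T" using H unfolding ISeg_def by blast
    thus "y \<in> T" using \<open>d < y\<close> by (auto simp: shift_def)
  qed
next
  assume H: "\<forall>x\<in>T. \<forall>y. d < y \<longrightarrow> y < x \<longrightarrow> y \<in> T"
  show "ISeg (shift d T)" unfolding ISeg_def shift_def using H by auto
qed

lemma card_shift: "finite T \<Longrightarrow> card (shift d T) = card {x\<in>T. d < x}"
proof -
  assume fin: "finite T"
  have "bij_betw (\<lambda>x. x + d) (shift d T) {x\<in>T. d < x}"
    unfolding bij_betw_def
  proof
    show "inj_on (\<lambda>x. x + d) (shift d T)" by (auto simp: inj_on_def)
    show "(\<lambda>x. x + d) ` shift d T = {x \<in> T. d < x}"
    proof (rule set_eqI, rule iffI)
      fix x assume "x \<in> (\<lambda>x. x + d) ` shift d T" thus "x \<in> {x \<in> T. d < x}" by (auto simp: shift_def)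
    next
      fix x assume x: "x \<in> {x \<in> T. d < x}"
      hence "x - d \<in> shift d T" "x = (x - d) + d" by (auto simp: shift_def)
      thus "x \<in> (\<lambda>x. x + d) ` shift d T" by (metis image_eqI)
    qed
  qed
  thus ?thesis by (rule bij_betw_same_card)
qed

lemma fsum_rec:
  assumes m: "0 < m" and T: "T \<subseteq> {1..<m}"
  shows "fsum m T = (\<Sum>d<m. (if unimodal [m - d] (shift d T) then (-1) ^ card (shift d T) else 0) / real m * fsum d (T \<inter> {..<d}))"
proof -
  let ?h = "\<lambda>g. if unimodal g T then (-1::real) ^ card (T - Sset g) / real (pi_comp g) else 0"
  have "fsum m T = sum ?h ((\<lambda>(d, g). g @ [m - d]) ` (SIGMA d:{..<m}. compositions d))"
    unfolding fsum_def using compositions_snoc[OF m] by simp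
  also have "\<dots> = (\<Sum>(d,g)\<in>(SIGMA d:{..<m}. compositions d). ?h (g @ [m - d]))"
    by (subst sum.reindex[OF compositions_snoc_inj]) (simp add: case_prod_unfold)
  also have "\<dots> = (\<Sum>d<m. \<Sum>g\<in>compositions d. ?h (g @ [m - d]))"
    by (rule sum.Sigma[symmetric]) (auto simp: finite_compositions)
  also have "\<dots> = (\<Sum>d<m. (if unimodal [m - d] (shift d T) then (-1) ^ card (shift d T) else 0) / real m * fsum d (T \<inter> {..<d}))"
  proof (rule sum.cong[OF refl])
    fix d assume d: "d \<in> {..<m}"
    show "(\<Sum>g\<in>compositions d. ?h (g @ [m - d])) = (if unimodal [m - d] (shift d T) then (-1) ^ card (shift d T) else 0) / real m * fsum d (T \<inter> {..<d})"
      unfolding fsum_def sum_distrib_left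
    proof (rule sum.cong[OF refl])
      fix g assume g: "g \<in> compositions d"
      have pg: "pos g" "sum_list g = d" using g by (auto simp: compositions_iff)
      have pj: "pos [m - d]" using d by simp
      have TT: "T \<subseteq> {1..<sum_list g + sum_list [m - d]}" using T pg d by auto
      have U: "unimodal (g @ [m - d]) T \<longleftrightarrow> unimodal g (T \<inter> {..<d}) \<and> unimodal [m - d] (shift d T)"
        using unimodal_append[OF pg(1) pj TT] pg by simp
      have C: "card (T - Sset (g @ [m - d])) = card (T \<inter> {..<d} - Sset g) + card (shift d T)"
        using sign_append[OF pg(1) pj TT] pg by simp
      have P: "pi_comp (g @ [m - d]) = pi_comp g * m" using pi_comp_snoc[of g "m - d"] pg d by simp
      show "?h (g @ [m - d]) = (if unimodal [m - d] (shift d T) then (-1) ^ card (shift d T) else 0) / real m *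
          (if unimodal g (T \<inter> {..<d}) then (-1) ^ card (T \<inter> {..<d} - Sset g) / real (pi_comp g) else 0)"
        using U C P by (simp add: power_add)
    qed
  qed
  finally show ?thesis .
qed

lemma fsum_eq: "T \<subseteq> {1..<m} \<Longrightarrow> fsum m T = (if T = {} then 1 else 0)"
proof (induction m arbitrary: T rule: less_induct)
  case (less m)
  show ?case
  proof (cases "m = 0")
    case True
    hence "compositions m = {[]}" using pos_sum_eq_0 by (fastforce simp: compositions_iff simp del: sum_list_eq_0_iff)
    moreover have "T = {}" using less.prems True by auto
    ultimately show ?thesis by (simp add: fsum_def pi_comp_def unimodal_def)
  next
    case False
    hence m: "0 < m" by simp
    let ?c = "\<lambda>d. (if unimodal [m - d] (shift d T) then (-1::real) ^ card (shift d T) else 0)"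
    have sh: "shift d T \<subseteq> {1..<m - d}" for d using less.prems by (auto simp: shift_def)
    have IH: "fsum d (T \<inter> {..<d}) = (if T \<inter> {..<d} = {} then 1 else 0)" if "d < m" for d
      by (rule less.IH[OF that]) (use less.prems in auto)
    have R: "fsum m T = (\<Sum>d<m. ?c d / real m * (if T \<inter> {..<d} = {} then 1 else 0))"
      unfolding fsum_rec[OF m less.prems] by (rule sum.cong) (auto simp: IH)
    show ?thesis
    proof (cases "T = {}")
      case True
      have "?c d = 1" for d using sh[of d] True by (simp add: unimodal_single ISeg_def shift_def)
      thus ?thesis unfolding R using True m by simp
    next
      case Tne: False
      have fin: "finite T" using less.prems finite_subset by blast
      define a where "a = Min T"
      have aT: "a \<in> T" and amin: "\<And>x. x \<in> T \<Longrightarrow> a \<le> x" using fin Tne by (auto simp: a_def)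
      have a1: "1 \<le> a" "a < m" using aT less.prems by auto
      define P where "P = (\<forall>x\<in>T. \<forall>y. a \<le> y \<longrightarrow> y < x \<longrightarrow> y \<in> T)"
      let ?g = "\<lambda>d. ?c d / real m * (if T \<inter> {..<d} = {} then 1 else 0)"
      have zero: "?g d = 0" if "d \<in> {..<m} - {a - 1, a}" for d
      proof (cases "a < d")
        case True
        hence "a \<in> T \<inter> {..<d}" using aT by auto
        thus ?thesis by auto
      next
        case False
        hence "d + 1 < a" using that by auto
        have "\<not> ISeg (shift d T)"
        proof
          assume "ISeg (shift d T)"
          hence "d + 1 \<in> T" unfolding ISeg_shift using aT \<open>d + 1 < a\<close> by auto
          thus False using amin \<open>d + 1 < a\<close> by fastforce
        qed
        thus ?thesis using unimodal_single[OF sh[of d]] by simp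
      qed
      have "fsum m T = (\<Sum>d\<in>{a - 1, a}. ?g d)"
        unfolding R by (rule sum.mono_neutral_right) (use a1 zero in auto)
      also have "\<dots> = ?g (a - 1) + ?g a" using a1 by simp
      also have "\<dots> = 0"
      proof -
        have e1: "T \<inter> {..<a - 1} = {}" "T \<inter> {..<a} = {}" using amin by fastforce+
        have i1: "ISeg (shift (a - 1) T) \<longleftrightarrow> P" unfolding ISeg_shift P_def using a1 by auto
        have i2: "ISeg (shift a T) \<longleftrightarrow> P" unfolding ISeg_shift P_def
        proof (intro iffI ballI allI impI)
          fix x y assume H: "\<forall>x\<in>T. \<forall>y. a < y \<longrightarrow> y < x \<longrightarrow> y \<in> T" "x \<in> T" "a \<le> y" "y < x"
          show "y \<in> T" proof (cases "y = a") case True thus ?thesis using aT by simp next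
            case False thus ?thesis using H by auto qed
        qed auto
        have c1: "card (shift (a - 1) T) = card T"
        proof -
          have "{x\<in>T. a - 1 < x} = T" using amin a1 by force
          thus ?thesis unfolding card_shift[OF fin] by simp
        qed
        have c2: "card (shift a T) = card T - 1"
        proof -
          have "{x\<in>T. a < x} = T - {a}" using amin by force
          thus ?thesis unfolding card_shift[OF fin] using aT fin by simp
        qed
        have cT: "card T \<ge> 1" using fin Tne by (simp add: Suc_le_eq card_gt_0_iff)
        have "(-1::real) ^ card T + (-1) ^ (card T - 1) = 0"
        proof -
          obtain k where "card T = Suc k" using cT by (metis Suc_le_D One_nat_def)
          thus ?thesis by simp
        qed
        thus ?thesis unfolding unimodal_single[OF sh] i1 i2 c1 c2 e1 by (simp add: add_divide_distrib[symmetric])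
      qed
      finally show ?thesis using Tne by simp
    qed
  qed
qed


lemma block_cons_Suc: "block (k # b) (Suc i) = (\<lambda>x. k + x) ` block b i"
  using block_append_ge[of "[k]" b i] by simp

lemma block_cons_0: "block (k # b) 0 = {1..k}"
  by (simp add: block_def)

lemma upt_split_add: "[0..<length (g @ a)] = [0..<length g] @ map (\<lambda>j. length g + j) [0..<length a]"
proof -
  have "map (\<lambda>j. length g + j) [0..<n] = [length g..<length g + n]" for n
    by (induction n) auto
  thus ?thesis using upt_add_eq_append[of 0 "length g" "length a"] by simp
qed

lemma refine_part_0:
  assumes g: "pos g" "sum_list g = k" and a: "pos a"
  shows "refine_part (g @ a) (k # b) 0 = g"
proof -
  have f1: "filter (\<lambda>j. block (g @ a) j \<subseteq> block (k # b) 0) [0..<length g] = [0..<length g]"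
  proof (rule filter_True, intro ballI)
    fix j assume "j \<in> set [0..<length g]"
    hence j: "j < length g" by simp
    show "block (g @ a) j \<subseteq> block (k # b) 0"
      using block_append_less[OF j] block_bound[OF g(1) j] g(2) block_cons_0 by simp
  qed
  have f2: "filter (\<lambda>j. block (g @ a) j \<subseteq> block (k # b) 0) (map (\<lambda>j. length g + j) [0..<length a]) = []"
  proof (rule filter_False, intro ballI)
    fix j' assume "j' \<in> set (map (\<lambda>j. length g + j) [0..<length a])"
    hence jj: "length g \<le> j'" "j' < length g + length a" by auto
    define j where "j = j' - length g"
    have j: "j < length a" and j': "j' = length g + j" using jj by (auto simp: j_def)
    show "\<not> block (g @ a) j' \<subseteq> block (k # b) 0"
    proof
      assume sub: "block (g @ a) j' \<subseteq> block (k # b) 0"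
      obtain x where x: "x \<in> block a j" using block_nonempty[OF a j] by auto
      have "x \<ge> 1" using block_bound[OF a j] x by auto
      moreover have "k + x \<in> block (g @ a) j'" unfolding j' block_append_ge g(2) using x by simp
      hence "k + x \<in> {1..k}" using sub block_cons_0 by auto
      ultimately show False by simp
    qed
  qed
  have "refine_part (g @ a) (k # b) 0 = map (\<lambda>j. (g @ a) ! j) [0..<length g]"
    unfolding refine_part_def upt_split_add filter_append f1 f2 by simp
  also have "\<dots> = map (\<lambda>j. g ! j) [0..<length g]" by (rule map_cong) (auto simp: nth_append)
  also have "\<dots> = g" by (rule map_nth)
  finally show ?thesis .
qed

lemma refine_part_Suc:
  assumes g: "pos g" "sum_list g = k" and a: "pos a"
  shows "refine_part (g @ a) (k # b) (Suc i) = refine_part a b i"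
proof -
  have f1: "filter (\<lambda>j. block (g @ a) j \<subseteq> block (k # b) (Suc i)) [0..<length g] = []"
  proof (rule filter_False, intro ballI)
    fix j assume "j \<in> set [0..<length g]"
    hence j: "j < length g" by simp
    show "\<not> block (g @ a) j \<subseteq> block (k # b) (Suc i)"
    proof
      assume sub: "block (g @ a) j \<subseteq> block (k # b) (Suc i)"
      obtain x where x: "x \<in> block g j" using block_nonempty[OF g(1) j] by auto
      have "x \<le> k" using block_bound[OF g(1) j] x g(2) by auto
      moreover have "x \<in> (\<lambda>x. k + x) ` block b i" using sub x block_append_less[OF j] block_cons_Suc by auto
      moreover have "\<forall>y\<in>block b i. 1 \<le> y" by (auto simp: block_def)
      ultimately show False by auto
    qed
  qed
  have eqv: "block (g @ a) (length g + j) \<subseteq> block (k # b) (Suc i) \<longleftrightarrow> block a j \<subseteq> block b i" for j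
  proof -
    have "block (g @ a) (length g + j) \<subseteq> block (k # b) (Suc i) \<longleftrightarrow> (\<lambda>x. k + x) ` block a j \<subseteq> (\<lambda>x. k + x) ` block b i"
      unfolding block_append_ge block_cons_Suc g(2) ..
    also have "\<dots> \<longleftrightarrow> block a j \<subseteq> block b i"
      by (rule inj_image_subset_iff) (auto simp: inj_on_def)
    finally show ?thesis .
  qed
  have f2: "filter (\<lambda>j. block (g @ a) j \<subseteq> block (k # b) (Suc i)) (map (\<lambda>j. length g + j) [0..<length a])
     = map (\<lambda>j. length g + j) (filter (\<lambda>j. block a j \<subseteq> block b i) [0..<length a])"
    unfolding filter_map o_def eqv ..
  have "refine_part (g @ a) (k # b) (Suc i) = map (\<lambda>j. (g @ a) ! (length g + j)) (filter (\<lambda>j. block a j \<subseteq> block b i) [0..<length a])"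
    unfolding refine_part_def upt_split_add filter_append f1 f2 by simp
  also have "\<dots> = refine_part a b i" unfolding refine_part_def by (simp add: nth_append)
  finally show ?thesis .
qed

lemma pi_pair_cons:
  assumes g: "pos g" "sum_list g = k" and a: "pos a"
  shows "pi_pair (g @ a) (k # b) = pi_comp g * pi_pair a b"
  unfolding pi_pair_def length_Cons prod.lessThan_Suc_shift
  by (simp add: refine_part_0[OF g a] refine_part_Suc[OF g a])

lemma pos_prefix_unique:
  "pos a \<Longrightarrow> pos a2 \<Longrightarrow> sum_list a = sum_list a2 \<Longrightarrow> a @ b = a2 @ b2 \<Longrightarrow> a = a2"
proof (induction a arbitrary: a2)
  case Nil thus ?case using pos_sum_eq_0[of a2] by simp
next
  case (Cons x a)
  then obtain a2' where "a2 = x # a2'" by (cases a2) auto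
  thus ?case using Cons by auto
qed

lemma Sset_cons: "Sset (k # b) = (if b \<noteq> [] then {k} else {}) \<union> (\<lambda>x. k + x) ` Sset b"
  using Sset_append[of "[k]" b] by simp

lemma comp_le_append_cons:
  assumes g: "pos g" "sum_list g = k" "0 < k" and a: "pos a" and b: "pos b" and ab: "sum_list a = sum_list b"
  shows "comp_le (g @ a) (k # b) \<longleftrightarrow> comp_le a b"
proof -
  have ane: "a \<noteq> [] \<longleftrightarrow> b \<noteq> []" using ab pos_sum_eq_0[OF a] pos_sum_eq_0[OF b] by auto
  have gne: "g \<noteq> []" using g by auto
  have Sg: "Sset g \<subseteq> {1..<k}" using Sset_bound[OF g(1)] g by simp
  have Sb: "Sset b \<subseteq> {1..}" "Sset a \<subseteq> {1..}" using Sset_pos a b by auto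
  have "comp_le (g @ a) (k # b) \<longleftrightarrow>
     (if b \<noteq> [] then {k} else {}) \<union> (\<lambda>x. k + x) ` Sset b \<subseteq> Sset g \<union> (if a \<noteq> [] then {k} else {}) \<union> (\<lambda>x. k + x) ` Sset a"
    unfolding comp_le_def Sset_cons Sset_append using gne g by simp
  also have "\<dots> \<longleftrightarrow> (\<lambda>x. k + x) ` Sset b \<subseteq> (\<lambda>x. k + x) ` Sset a"
  proof (cases "b = []")
    case True thus ?thesis using ane by simp
  next
    case False
    have X: "(\<lambda>x. k + x) ` Sset b \<subseteq> {k<..}" "(\<lambda>x. k + x) ` Sset a \<subseteq> {k<..}" using Sb by auto
    have gen: "({k} \<union> X \<subseteq> Z \<union> {k} \<union> Y) \<longleftrightarrow> X \<subseteq> Y" if "X \<subseteq> {k<..}" "Z \<subseteq> {..<k}" for X Y Z :: "nat set"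
    proof
      assume H: "{k} \<union> X \<subseteq> Z \<union> {k} \<union> Y"
      show "X \<subseteq> Y"
      proof
        fix x assume x: "x \<in> X"
        hence "x \<notin> Z" "x \<noteq> k" using that by (auto dest!: subsetD)
        thus "x \<in> Y" using H x by blast
      qed
    qed auto
    have Sg': "Sset g \<subseteq> {..<k}" using Sg by auto
    show ?thesis using gen[OF X(1) Sg', of "(\<lambda>x. k + x) ` Sset a"] False ane by simp
  qed
  also have "\<dots> \<longleftrightarrow> comp_le a b" unfolding comp_le_def
    by (rule inj_image_subset_iff) (auto simp: inj_on_def)
  finally show ?thesis .
qed


lemma refinements_cons:
  assumes kb: "k # b \<in> compositions n"
  shows "{\<alpha>. \<alpha> \<in> compositions n \<and> comp_le \<alpha> (k # b)} =
    (\<lambda>(g, a). g @ a) ` (compositions k \<times> {a. a \<in> compositions (n - k) \<and> comp_le a b})"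
proof -
  have k: "0 < k" and b: "pos b" and n: "n = k + sum_list b" using kb by (auto simp: compositions_iff)
  show ?thesis
  proof (rule set_eqI, rule iffI)
    fix \<alpha> assume "\<alpha> \<in> {\<alpha>. \<alpha> \<in> compositions n \<and> comp_le \<alpha> (k # b)}"
    hence \<alpha>: "pos \<alpha>" "sum_list \<alpha> = n" "comp_le \<alpha> (k # b)" by (auto simp: compositions_iff)
    show "\<alpha> \<in> (\<lambda>(g, a). g @ a) ` (compositions k \<times> {a. a \<in> compositions (n - k) \<and> comp_le a b})"
    proof (cases "b = []")
      case True
      have "\<alpha> \<in> compositions k" "[] \<in> compositions (n - k)" "comp_le [] b"
        using \<alpha> True n by (auto simp: compositions_iff comp_le_def)
      thus ?thesis by (auto intro!: image_eqI[of _ _ "(\<alpha>, [])"])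
    next
      case False
      have "k \<in> Sset (k # b)" using False by (simp add: Sset_cons)
      hence "k \<in> Sset \<alpha>" using \<alpha>(3) by (auto simp: comp_le_def)
      then obtain i where i: "1 \<le> i" "i < length \<alpha>" "k = sum_list (take i \<alpha>)" unfolding Sset_alt by auto
      define g where "g = take i \<alpha>"
      define a where "a = drop i \<alpha>"
      have ga: "\<alpha> = g @ a" by (simp add: g_def a_def)
      have pg: "pos g" "pos a" using \<alpha>(1) ga by auto
      have sg: "sum_list g = k" using i g_def by simp
      have sa: "sum_list a = n - k" using \<alpha>(2) ga sg by auto
      have "comp_le a b" using comp_le_append_cons[OF pg(1) sg k pg(2) b] sa n \<alpha>(3) ga by simp
      hence "(g, a) \<in> compositions k \<times> {a. a \<in> compositions (n - k) \<and> comp_le a b}"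
        using pg sg sa by (simp add: compositions_iff)
      thus ?thesis using ga by (auto intro!: image_eqI[of _ _ "(g, a)"])
    qed
  next
    fix \<alpha> assume "\<alpha> \<in> (\<lambda>(g, a). g @ a) ` (compositions k \<times> {a. a \<in> compositions (n - k) \<and> comp_le a b})"
    then obtain g a where ga: "\<alpha> = g @ a" and g: "pos g" "sum_list g = k" and a: "pos a" "sum_list a = n - k" "comp_le a b"
      by (auto simp: compositions_iff)
    have "comp_le \<alpha> (k # b)" using comp_le_append_cons[OF g k a(1) b] a n ga by simp
    thus "\<alpha> \<in> {\<alpha>. \<alpha> \<in> compositions n \<and> comp_le \<alpha> (k # b)}" using ga g a n by (auto simp: compositions_iff)
  qed
qed

lemma refinements_cons_inj:
  "inj_on (\<lambda>(g, a). g @ a) (compositions k \<times> X)"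
proof (rule inj_onI, clarify)
  fix g a g2 a2 assume "g \<in> compositions k" "g2 \<in> compositions k" "g @ a = g2 @ a2"
  moreover hence "g = g2" using pos_prefix_unique by (auto simp: compositions_iff)
  ultimately show "g = g2 \<and> a = a2" by simp
qed

lemma subset_Sset_cons:
  assumes b: "pos b" and S: "S \<subseteq> {1..<k + sum_list b}"
  shows "S \<subseteq> Sset (k # b) \<longleftrightarrow> S \<inter> {..<k} = {} \<and> shift k S \<subseteq> Sset b"
proof
  assume H: "S \<subseteq> Sset (k # b)"
  show "S \<inter> {..<k} = {} \<and> shift k S \<subseteq> Sset b"
  proof
    show "S \<inter> {..<k} = {}" using H by (auto simp: Sset_cons split: if_splits)
    show "shift k S \<subseteq> Sset b"
    proof
      fix x assume "x \<in> shift k S"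
      hence x: "0 < x" "x + k \<in> S" by (auto simp: shift_def)
      hence "x + k \<in> Sset (k # b)" using H by auto
      thus "x \<in> Sset b" using x by (auto simp: Sset_cons add.commute split: if_splits)
    qed
  qed
next
  assume H: "S \<inter> {..<k} = {} \<and> shift k S \<subseteq> Sset b"
  show "S \<subseteq> Sset (k # b)"
  proof
    fix x assume x: "x \<in> S"
    hence xk: "k \<le> x" using H by auto
    show "x \<in> Sset (k # b)"
    proof (cases "x = k")
      case True
      hence "b \<noteq> []" using x S by auto
      thus ?thesis using True by (simp add: Sset_cons)
    next
      case False
      hence "x - k \<in> shift k S" using x xk by (auto simp: shift_def)
      hence "x - k \<in> Sset b" using H by auto
      hence "k + (x - k) \<in> Sset (k # b)" by (simp add: Sset_cons)
      thus ?thesis using xk by simp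
    qed
  qed
qed

lemma G_eq:
  "\<beta> \<in> compositions n \<Longrightarrow> S \<subseteq> {1..<n} \<Longrightarrow>
   (\<Sum>\<alpha> | \<alpha> \<in> compositions n \<and> comp_le \<alpha> \<beta>.
      if unimodal \<alpha> S then (-1::real) ^ card (S - Sset \<alpha>) / real (pi_pair \<alpha> \<beta>) else 0)
   = (if S \<subseteq> Sset \<beta> then 1 else 0)"
proof (induction \<beta> arbitrary: n S)
  case Nil
  hence n: "n = 0" and S: "S = {}" by (auto simp: compositions_iff)
  have "{\<alpha>. \<alpha> \<in> compositions n \<and> comp_le \<alpha> []} = {[]}"
    using n pos_sum_eq_0 by (fastforce simp: compositions_iff comp_le_def simp del: sum_list_eq_0_iff)
  thus ?case using S by (simp add: unimodal_def pi_pair_def)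
next
  case (Cons k b)
  have k: "0 < k" and b: "pos b" and n: "n = k + sum_list b" using Cons.prems by (auto simp: compositions_iff)
  let ?R' = "{a. a \<in> compositions (n - k) \<and> comp_le a b}"
  let ?h = "\<lambda>\<alpha>. if unimodal \<alpha> S then (-1::real) ^ card (S - Sset \<alpha>) / real (pi_pair \<alpha> (k # b)) else 0"
  let ?h1 = "\<lambda>g. if unimodal g (S \<inter> {..<k}) then (-1::real) ^ card (S \<inter> {..<k} - Sset g) / real (pi_comp g) else 0"
  let ?h2 = "\<lambda>a. if unimodal a (shift k S) then (-1::real) ^ card (shift k S - Sset a) / real (pi_pair a b) else 0"
  have "(\<Sum>\<alpha> | \<alpha> \<in> compositions n \<and> comp_le \<alpha> (k # b). ?h \<alpha>) = sum ?h ((\<lambda>(g, a). g @ a) ` (compositions k \<times> ?R'))"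
    using refinements_cons[OF Cons.prems(1)] by simp
  also have "\<dots> = (\<Sum>(g, a)\<in>compositions k \<times> ?R'. ?h (g @ a))"
    by (subst sum.reindex[OF refinements_cons_inj]) (simp add: case_prod_unfold)
  also have "\<dots> = (\<Sum>(g, a)\<in>compositions k \<times> ?R'. ?h1 g * ?h2 a)"
  proof (rule sum.cong[OF refl], clarify)
    fix g a assume g: "g \<in> compositions k" and a: "a \<in> compositions (n - k)" "comp_le a b"
    have pg: "pos g" "sum_list g = k" and pa: "pos a" "sum_list a = n - k" using g a by (auto simp: compositions_iff)
    have SS: "S \<subseteq> {1..<sum_list g + sum_list a}" using Cons.prems(2) pg pa n by auto
    have U: "unimodal (g @ a) S \<longleftrightarrow> unimodal g (S \<inter> {..<k}) \<and> unimodal a (shift k S)"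
      using unimodal_append[OF pg(1) pa(1) SS] pg by simp
    have C: "card (S - Sset (g @ a)) = card (S \<inter> {..<k} - Sset g) + card (shift k S - Sset a)"
      using sign_append[OF pg(1) pa(1) SS] pg by simp
    have P: "pi_pair (g @ a) (k # b) = pi_comp g * pi_pair a b" using pi_pair_cons[OF pg pa(1)] .
    show "?h (g @ a) = ?h1 g * ?h2 a" using U C P by (simp add: power_add)
  qed
  also have "\<dots> = (\<Sum>g\<in>compositions k. ?h1 g) * (\<Sum>a\<in>?R'. ?h2 a)"
    by (simp add: sum_product sum.cartesian_product)
  also have "(\<Sum>g\<in>compositions k. ?h1 g) = (if S \<inter> {..<k} = {} then 1 else 0)"
  proof -
    have "S \<inter> {..<k} \<subseteq> {1..<k}" using Cons.prems(2) by auto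
    from fsum_eq[OF this] show ?thesis unfolding fsum_def .
  qed
  also have "(\<Sum>a\<in>?R'. ?h2 a) = (if shift k S \<subseteq> Sset b then 1 else 0)"
  proof -
    have "b \<in> compositions (n - k)" using b n by (simp add: compositions_iff)
    moreover have "shift k S \<subseteq> {1..<n - k}" using Cons.prems(2) by (auto simp: shift_def)
    ultimately show ?thesis using Cons.IH by simp
  qed
  finally show ?case using subset_Sset_cons[OF b, of S k] Cons.prems(2) n by auto
qed


definition vs :: "(nat \<Rightarrow> nat) \<Rightarrow> nat list" where
  "vs e = sorted_list_of_set {v. e v \<noteq> 0}"

definition flat :: "(nat \<Rightarrow> nat) \<Rightarrow> nat list" where
  "flat e = map e (vs e)"

lemma sum_nth_delta:
  assumes "distinct xs" "i < length xs"
  shows "(\<Sum>k<length xs. if xs ! k = xs ! i then c k else 0) = (c i :: nat)"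
proof -
  have "(\<Sum>k<length xs. if xs ! k = xs ! i then c k else 0) = (\<Sum>k<length xs. if k = i then c k else 0)"
    by (rule sum.cong) (use assms in \<open>auto simp: nth_eq_iff_index_eq\<close>)
  also have "\<dots> = c i" using assms by simp
  finally show ?thesis .
qed

lemma sum_nth_none:
  assumes "v \<notin> set xs"
  shows "(\<Sum>k<length xs. if xs ! k = v then c k else 0) = (0 :: nat)"
  using assms by (auto intro!: sum.neutral simp: in_set_conv_nth)

lemma M_coeff_eq:
  assumes b: "pos \<beta>" and fin: "finite {v. e v \<noteq> 0}"
  shows "M_coeff \<beta> e = (if \<beta> = flat e then 1 else 0)"
proof -
  let ?X = "{ix. length ix = length \<beta> \<and> sorted_wrt (<) ix \<and>
      (\<forall>v. e v = (\<Sum>k<length \<beta>. if ix ! k = v then \<beta> ! k else 0))}"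
  have vsp: "sorted_wrt (<) (vs e)" "set (vs e) = {v. e v \<noteq> 0}"
    unfolding vs_def using fin by (auto simp: strict_sorted_list_of_set)
  have X: "?X = (if \<beta> = flat e then {vs e} else {})"
  proof (rule set_eqI, rule iffI)
    fix ix assume "ix \<in> ?X"
    hence l: "length ix = length \<beta>" and s: "sorted_wrt (<) ix" and E: "\<And>v. e v = (\<Sum>k<length \<beta>. if ix ! k = v then \<beta> ! k else 0)"
      by auto
    have d: "distinct ix" using s by (simp add: strict_sorted_iff)
    have ei: "e (ix ! i) = \<beta> ! i" if "i < length ix" for i
      using E[of "ix ! i"] sum_nth_delta[OF d that, of "\<lambda>k. \<beta> ! k"] l by simp
    have "set ix = {v. e v \<noteq> 0}"
    proof (rule set_eqI)
      fix v show "v \<in> set ix \<longleftrightarrow> v \<in> {v. e v \<noteq> 0}"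
      proof
        assume "v \<in> set ix"
        then obtain i where i: "i < length ix" "v = ix ! i" by (auto simp: in_set_conv_nth)
        have "\<beta> ! i \<in> set \<beta>" using i l by simp
        hence "\<beta> ! i > 0" using b by (auto simp: pos_def)
        thus "v \<in> {v. e v \<noteq> 0}" using ei[OF i(1)] i by simp
      next
        assume "v \<in> {v. e v \<noteq> 0}"
        show "v \<in> set ix"
        proof (rule ccontr)
          assume "v \<notin> set ix"
          hence "e v = 0" using E[of v] sum_nth_none[of v "ix" "\<lambda>k. \<beta> ! k"] l by simp
          thus False using \<open>v \<in> {v. e v \<noteq> 0}\<close> by simp
        qed
      qed
    qed
    hence isv: "ix = vs e"
      using sorted_distinct_set_unique[of "ix" "vs e"] s vsp by (simp add: strict_sorted_iff)
    have "\<beta> = map e ix" by (rule nth_equalityI) (use l ei in auto)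
    thus "ix \<in> (if \<beta> = flat e then {vs e} else {})" using isv by (simp add: flat_def)
  next
    fix ix assume "ix \<in> (if \<beta> = flat e then {vs e} else {})"
    hence isv: "ix = vs e" and bf: "\<beta> = map e (vs e)" by (auto simp: flat_def split: if_splits)
    have d: "distinct (vs e)" using vsp by (simp add: strict_sorted_iff)
    have "e v = (\<Sum>k<length \<beta>. if vs e ! k = v then \<beta> ! k else 0)" for v
    proof (cases "v \<in> set (vs e)")
      case True
      then obtain i where i: "i < length (vs e)" "v = vs e ! i" by (auto simp: in_set_conv_nth)
      show ?thesis using sum_nth_delta[OF d i(1), of "\<lambda>k. \<beta> ! k"] i bf by simp
    next
      case False
      thus ?thesis using sum_nth_none[OF False, of "\<lambda>k. \<beta> ! k"] bf vsp by simp
    qed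
    thus "ix \<in> ?X" using isv bf vsp by simp
  qed
  show ?thesis unfolding M_coeff_def X by simp
qed


definition cat :: "(nat \<Rightarrow> nat) \<Rightarrow> nat list \<Rightarrow> nat list" where
  "cat c ws = concat (map (\<lambda>v. replicate (c v) v) ws)"

lemma cat_Cons: "cat c (w # ws) = replicate (c w) w @ cat c ws"
  by (simp add: cat_def)

lemma count_list_replicate: "count_list (replicate n w) v = (if w = v then n else 0)"
  by (induction n) auto

lemma cat_sorted: "sorted ws \<Longrightarrow> sorted (cat c ws)"
  by (induction ws) (auto simp: cat_def sorted_append)

lemma cat_count: "distinct ws \<Longrightarrow> count_list (cat c ws) v = (if v \<in> set ws then c v else 0)"
  by (induction ws) (auto simp: cat_def count_list_replicate)

lemma cat_length: "length (cat c ws) = sum_list (map c ws)"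
  by (induction ws) (auto simp: cat_def)

lemma cat_nth0: "0 < c w \<Longrightarrow> cat c (w # ws) ! 0 = w"
  by (simp add: cat_Cons nth_append)

lemma cat_asc:
  assumes "sorted_wrt (<) ws" "\<forall>w\<in>set ws. 0 < c w" "1 \<le> i" "i < length (cat c ws)"
  shows "cat c ws ! (i - 1) < cat c ws ! i \<longleftrightarrow> i \<in> Sset (map c ws)"
  using assms
proof (induction ws arbitrary: i)
  case Nil thus ?case by (simp add: cat_def)
next
  case (Cons w ws)
  let ?L = "cat c ws"
  have cw: "0 < c w" using Cons.prems by simp
  have len: "i < c w + length ?L" using Cons.prems(4) by (simp add: cat_Cons)
  have Sb: "Sset (map c ws) \<subseteq> {1..}"
    using Sset_pos[of "map c ws"] Cons.prems(2) by (auto simp: pos_def)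
  have SS: "Sset (map c (w # ws)) = (if ws \<noteq> [] then {c w} else {}) \<union> (\<lambda>x. c w + x) ` Sset (map c ws)"
    by (simp add: Sset_cons)
  show ?case
  proof (cases "i < c w")
    case True
    have "cat c (w # ws) ! (i - 1) = w" "cat c (w # ws) ! i = w" using True Cons.prems(3)
      by (auto simp: cat_Cons nth_append)
    moreover have "i \<notin> Sset (map c (w # ws))" using True Sb unfolding SS by auto
    ultimately show ?thesis by simp
  next
    case False
    show ?thesis
    proof (cases "i = c w")
      case True
      hence Lne: "?L \<noteq> []" using len by auto
      then obtain w' ws' where ws: "ws = w' # ws'" by (cases ws) (auto simp: cat_def)
      have "cat c (w # ws) ! (i - 1) = w" using True cw by (auto simp: cat_Cons nth_append)
      moreover have "cat c (w # ws) ! i = w'" using True Cons.prems(2) ws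
        by (simp add: cat_Cons nth_append cat_nth0)
      moreover have "w < w'" using Cons.prems(1) ws by simp
      moreover have "i \<in> Sset (map c (w # ws))" using True ws unfolding SS by simp
      ultimately show ?thesis by simp
    next
      case False2: False
      define j where "j = i - c w"
      have j: "i = c w + j" "1 \<le> j" "j < length ?L" using False False2 len by (auto simp: j_def)
      have "cat c (w # ws) ! (i - 1) = ?L ! (j - 1)" "cat c (w # ws) ! i = ?L ! j"
        using j by (auto simp: cat_Cons nth_append)
      moreover have "i \<in> Sset (map c (w # ws)) \<longleftrightarrow> j \<in> Sset (map c ws)"
        using j unfolding SS by auto
      moreover have "?L ! (j - 1) < ?L ! j \<longleftrightarrow> j \<in> Sset (map c ws)"
        using Cons.IH[of j] Cons.prems j by simp
      ultimately show ?thesis by simp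
    qed
  qed
qed

lemma F_coeff_eq:
  assumes fin: "finite {v. e v \<noteq> 0}" and S: "S \<subseteq> {1..n-1}"
  shows "F_coeff n S e = (if sum_list (flat e) = n \<and> S \<subseteq> Sset (flat e) then 1 else 0)"
proof -
  let ?j = "cat e (vs e)"
  have vsp: "sorted_wrt (<) (vs e)" "set (vs e) = {v. e v \<noteq> 0}"
    unfolding vs_def using fin by (auto simp: strict_sorted_list_of_set)
  have d: "distinct (vs e)" "sorted (vs e)" using vsp(1) by (auto simp: strict_sorted_iff)
  have js: "sorted ?j" using cat_sorted[OF d(2)] .
  have jc: "count_list ?j v = e v" for v using cat_count[OF d(1)] vsp by simp
  have jl: "length ?j = sum_list (flat e)" by (simp add: cat_length flat_def)
  have uniq: "js = ?j" if "sorted js" "\<forall>v. count_list js v = e v" for js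
  proof -
    have "mset js = mset ?j" using that jc by (simp add: multiset_eq_iff count_mset)
    hence "sort ?j = js" using that by (metis properties_for_sort)
    thus ?thesis using js by (simp add: sorted_sort_id)
  qed
  have asc: "(\<forall>i\<in>S. ?j ! (i - 1) < ?j ! i) \<longleftrightarrow> S \<subseteq> Sset (flat e)" if "length ?j = n"
  proof -
    have "?j ! (i - 1) < ?j ! i \<longleftrightarrow> i \<in> Sset (flat e)" if "i \<in> S" for i
    proof -
      have "1 \<le> i" "i \<le> n - 1" using S that by auto
      hence i: "1 \<le> i" "i < length ?j" using \<open>length ?j = n\<close> by auto
      show ?thesis unfolding flat_def by (rule cat_asc) (use vsp i in auto)
    qed
    thus ?thesis by auto
  qed
  let ?Y = "{js. length js = n \<and> sorted js \<and> (\<forall>i\<in>S. js ! (i - 1) < js ! i) \<and> (\<forall>v. count_list js v = e v)}"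
  have Yeq: "?Y = (if sum_list (flat e) = n \<and> S \<subseteq> Sset (flat e) then {?j} else {})"
  proof (cases "sum_list (flat e) = n \<and> S \<subseteq> Sset (flat e)")
    case True
    have "?Y = {?j}"
    proof (rule set_eqI, rule iffI)
      fix x assume "x \<in> ?Y" thus "x \<in> {?j}" using uniq by auto
    next
      fix x assume "x \<in> {?j}"
      hence x: "x = ?j" by simp
      have "length ?j = n" using jl True by simp
      hence "\<forall>i\<in>S. ?j ! (i - 1) < ?j ! i" using asc True by blast
      thus "x \<in> ?Y" using x js jc \<open>length ?j = n\<close> by simp
    qed
    thus ?thesis unfolding if_P[OF True] .
  next
    case False
    have "?Y = {}"
    proof (rule ccontr)
      assume "?Y \<noteq> {}"
      then obtain js where "js \<in> ?Y" by blast
      hence "js = ?j" "length js = n" "\<forall>i\<in>S. js ! (i - 1) < js ! i" using uniq by auto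
      thus False using False jl asc by auto
    qed
    thus ?thesis unfolding if_not_P[OF False] .
  qed
  show ?thesis unfolding F_coeff_def Yeq by simp
qed


lemma z_pos: "pos \<alpha> \<Longrightarrow> 0 < z \<alpha>"
  unfolding z_def by (auto intro!: prod_pos simp: pos_def)

lemma pos_flat: "finite {v. e v \<noteq> 0} \<Longrightarrow> pos (flat e)"
  unfolding flat_def vs_def pos_def by auto

theorem theorem3p1:
  fixes n :: nat and S :: "nat set"
  assumes "S \<subseteq> {1..n-1}"
  shows "\<forall>e :: nat \<Rightarrow> nat. finite {v. e v \<noteq> 0} \<longrightarrow>
     F_coeff n S e =
     (\<Sum>\<alpha> | \<alpha> \<in> compositions n \<and> unimodal \<alpha> S.
        Psi_coeff \<alpha> e / real (z \<alpha>) * (-1) ^ card (S - Sset \<alpha>))"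
proof (intro allI impI)
  fix e :: "nat \<Rightarrow> nat" assume fin: "finite {v. e v \<noteq> 0}"
  have S': "S \<subseteq> {1..<n}"
  proof
    fix x assume "x \<in> S"
    hence "x \<in> {1..n-1}" using assms by blast
    thus "x \<in> {1..<n}" by auto
  qed
  let ?fe = "flat e"
  let ?sg = "\<lambda>\<alpha>. (-1::real) ^ card (S - Sset \<alpha>)"
  have step: "Psi_coeff \<alpha> e / real (z \<alpha>) * ?sg \<alpha> =
     (if ?fe \<in> compositions n \<and> comp_le \<alpha> ?fe then ?sg \<alpha> / real (pi_pair \<alpha> ?fe) else 0)"
    if a: "\<alpha> \<in> compositions n" for \<alpha>
  proof -
    have pa: "pos \<alpha>" "sum_list \<alpha> = n" using a by (auto simp: compositions_iff)
    have zne: "real (z \<alpha>) \<noteq> 0" using z_pos[OF pa(1)] by simp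
    have "Psi_coeff \<alpha> e / real (z \<alpha>) = (\<Sum>\<beta> | \<beta> \<in> compositions n \<and> comp_le \<alpha> \<beta>. M_coeff \<beta> e / real (pi_pair \<alpha> \<beta>))"
      unfolding Psi_coeff_def pa(2) using zne by simp
    also have "\<dots> = (\<Sum>\<beta> | \<beta> \<in> compositions n \<and> comp_le \<alpha> \<beta>. if \<beta> = ?fe then 1 / real (pi_pair \<alpha> \<beta>) else 0)"
      by (rule sum.cong) (auto simp: M_coeff_eq[OF _ fin] compositions_iff)
    also have "\<dots> = (if ?fe \<in> {\<beta>. \<beta> \<in> compositions n \<and> comp_le \<alpha> \<beta>} then 1 / real (pi_pair \<alpha> ?fe) else 0)"
      by (rule sum.delta) (simp add: finite_compositions)
    finally show ?thesis by simp
  qed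
  have R: "(\<Sum>\<alpha> | \<alpha> \<in> compositions n \<and> unimodal \<alpha> S. Psi_coeff \<alpha> e / real (z \<alpha>) * ?sg \<alpha>)
      = (\<Sum>\<alpha>\<in>compositions n. if unimodal \<alpha> S then
           (if ?fe \<in> compositions n \<and> comp_le \<alpha> ?fe then ?sg \<alpha> / real (pi_pair \<alpha> ?fe) else 0) else 0)"
  proof -
    have "(\<Sum>\<alpha> | \<alpha> \<in> compositions n \<and> unimodal \<alpha> S. Psi_coeff \<alpha> e / real (z \<alpha>) * ?sg \<alpha>)
      = (\<Sum>\<alpha> | \<alpha> \<in> compositions n \<and> unimodal \<alpha> S.
           (if ?fe \<in> compositions n \<and> comp_le \<alpha> ?fe then ?sg \<alpha> / real (pi_pair \<alpha> ?fe) else 0))"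
      by (rule sum.cong[OF refl], rule step) simp
    also have "\<dots> = (\<Sum>\<alpha>\<in>compositions n. if unimodal \<alpha> S then
           (if ?fe \<in> compositions n \<and> comp_le \<alpha> ?fe then ?sg \<alpha> / real (pi_pair \<alpha> ?fe) else 0) else 0)"
      by (rule sum.inter_filter[OF finite_compositions])
    finally show ?thesis .
  qed
  show "F_coeff n S e = (\<Sum>\<alpha> | \<alpha> \<in> compositions n \<and> unimodal \<alpha> S. Psi_coeff \<alpha> e / real (z \<alpha>) * ?sg \<alpha>)"
  proof (cases "?fe \<in> compositions n")
    case True
    have sf: "sum_list ?fe = n" using True by (simp add: compositions_iff)
    have "(\<Sum>\<alpha> | \<alpha> \<in> compositions n \<and> unimodal \<alpha> S. Psi_coeff \<alpha> e / real (z \<alpha>) * ?sg \<alpha>)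
       = (\<Sum>\<alpha>\<in>compositions n. if comp_le \<alpha> ?fe then (if unimodal \<alpha> S then ?sg \<alpha> / real (pi_pair \<alpha> ?fe) else 0) else 0)"
      unfolding R using True by (intro sum.cong) auto
    also have "\<dots> = (\<Sum>\<alpha> | \<alpha> \<in> compositions n \<and> comp_le \<alpha> ?fe. if unimodal \<alpha> S then ?sg \<alpha> / real (pi_pair \<alpha> ?fe) else 0)"
      by (simp add: sum.inter_filter[OF finite_compositions])
    also have "\<dots> = (if S \<subseteq> Sset ?fe then 1 else 0)"
      by (rule G_eq[OF True S'])
    also have "\<dots> = F_coeff n S e" using F_coeff_eq[OF fin assms] sf by simp
    finally show ?thesis ..
  next
    case False
    have sf: "sum_list ?fe \<noteq> n" using False pos_flat[OF fin] by (simp add: compositions_iff)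
    have "(\<Sum>\<alpha>\<in>compositions n. if unimodal \<alpha> S then
           (if ?fe \<in> compositions n \<and> comp_le \<alpha> ?fe then ?sg \<alpha> / real (pi_pair \<alpha> ?fe) else 0) else 0) = 0"
      by (rule sum.neutral) (use False in simp)
    thus ?thesis unfolding R using F_coeff_eq[OF fin assms] sf by simp
  qed
qed

end
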